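(* Let $d\geq 1000$ and let $\Omega\subseteq\mathbb{R}^d$ be bounded and measurable. Set $\Delta=\left(\frac{\sqrt d}{4\log d}\right)^d$. Then there exists a finite set $X\subset\Omega$ with \[ |X|\geq(1-1/d)\frac{\Delta}{2^d}\mathrm{Vol}(\Omega) \] such that the graph $G=G(X,r_d)$ satisfies \[ \Delta(G)\leq\Delta\big(1+\Delta^{-1/3}\big)\quad\text{and}\quad \Delta_2(G)\leq\Delta\cdot e^{-(\log d)^2/8}. \]
   Context: $r_d$ is the radius of the Euclidean ball of volume $1$ in $\mathbb{R}^d$. For a finite $X\subseteq\mathbb{R}^d$ and $r>0$, $G(X,r)$ is the graph with vertex set $X$ in which distinct $x,y$ are adjacent iff $\|x-y\|\leq 2r$. $\Delta(G)$ is the maximum degree, $\Delta_2(G)$ the maximum over distinct vertex pairs of the number of common neighbours. $\mathrm{Vol}$ is Lebesgue measure; $\log$ is the natural logarithm. *)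

theory Defs
  imports "HOL-Analysis.Analysis"
begin

definition unit_vol_radius :: "'a::euclidean_space itself \<Rightarrow> real" where
  "unit_vol_radius _ = (THE r. r > 0 \<and> measure lebesgue (ball (0::'a) r) = 1)"

definition ball_graph_nbrs :: "'a::real_normed_vector set \<Rightarrow> real \<Rightarrow> 'a \<Rightarrow> 'a set" where
  "ball_graph_nbrs X r x = {y \<in> X. y \<noteq> x \<and> norm (x - y) \<le> 2 * r}"

definition max_degree :: "'a::real_normed_vector set \<Rightarrow> real \<Rightarrow> nat" where
  "max_degree X r = Max (insert 0 ((\<lambda>x. card (ball_graph_nbrs X r x)) ` X))"

definition max_codegree :: "'a::real_normed_vector set \<Rightarrow> real \<Rightarrow> nat" where
  "max_codegree X r = Max (insert 0 ((\<lambda>(x,y). card (ball_graph_nbrs X r x \<inter> ball_graph_nbrs X r y))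
      ` {(x,y). x \<in> X \<and> y \<in> X \<and> x \<noteq> y}))"

end

theory Submission
  imports Defs "HOL-Probability.Probability" "HOL-Analysis.Harmonic_Numbers"
begin


lemma fsigma_borel: "fsigma S \<Longrightarrow> S \<in> sets borel"
  by (induction rule: fsigma.induct) (auto intro!: sets.countable_UN borel_closed)

lemma emeasure_lebesgue_borel: "S \<in> sets borel \<Longrightarrow> emeasure lebesgue S = emeasure lborel S"
  by (simp add: main_part_sets)

lemma uvr:
  defines "r \<equiv> unit_vol_radius TYPE('a::euclidean_space)"
  shows "r > 0" "\<And>(c::'a) \<rho>. \<rho> \<ge> 0 \<Longrightarrow> emeasure lborel (cball c \<rho>) = ennreal ((\<rho> / r) ^ DIM('a))"
    "\<And>(c::'a) \<rho>. \<rho> \<ge> 0 \<Longrightarrow> emeasure lborel (ball c \<rho>) = ennreal ((\<rho> / r) ^ DIM('a))"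
proof -
  define w where "w = unit_ball_vol (real DIM('a))"
  have w: "w > 0" unfolding w_def by simp
  define r0 where "r0 = root DIM('a) (1 / w)"
  have r0: "r0 > 0" unfolding r0_def using w by simp
  have r0p: "r0 ^ DIM('a) = 1 / w" unfolding r0_def using w by (simp add: real_root_pow_pos2)
  have mb: "measure lebesgue (ball (0::'a) \<rho>) = w * \<rho> ^ DIM('a)" if "\<rho> \<ge> 0" for \<rho>
    using content_ball[OF that, of "0::'a"] unfolding w_def by (simp add: measure_def emeasure_lebesgue_borel)
  have "r = r0" unfolding r_def unit_vol_radius_def
  proof (rule the_equality)
    show "0 < r0 \<and> measure lebesgue (ball (0::'a) r0) = 1" using r0 r0p w mb[of r0] by simp
  next
    fix r' assume h: "0 < r' \<and> measure lebesgue (ball (0::'a) r') = 1"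
    then have "w * r' ^ DIM('a) = w * r0 ^ DIM('a)" using mb[of r'] r0p w by simp
    then have "r' ^ DIM('a) = r0 ^ DIM('a)" using w by simp
    then show "r' = r0" using h r0 by (meson DIM_positive less_imp_le power_eq_imp_eq_base)
  qed
  then show rpos: "r > 0" using r0 by simp
  have key: "w * \<rho> ^ DIM('a) = (\<rho> / r) ^ DIM('a)" for \<rho>
    using \<open>r = r0\<close> r0p w r0 by (simp add: power_divide field_simps)
  show "emeasure lborel (cball c \<rho>) = ennreal ((\<rho> / r) ^ DIM('a))" if "\<rho> \<ge> 0" for c :: 'a and \<rho> :: real
    using emeasure_cball[OF that, of c] key[of \<rho>] unfolding w_def by (simp add: mult.commute)
  show "emeasure lborel (ball c \<rho>) = ennreal ((\<rho> / r) ^ DIM('a))" if "\<rho> \<ge> 0" for c :: 'a and \<rho> :: real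
    using emeasure_ball[OF that, of c] key[of \<rho>] unfolding w_def by (simp add: mult.commute)
qed

lemma lens_subset:
  fixes y1 y2 :: "'a::euclidean_space"
  assumes "t \<le> dist y1 y2" "0 \<le> t"
  shows "cball y1 R \<inter> cball y2 R \<subseteq> cball ((1/2) *\<^sub>R (y1 + y2)) (sqrt (R^2 - t^2/4))"
proof
  fix z assume z: "z \<in> cball y1 R \<inter> cball y2 R"
  define a where "a = z - y1"
  define b where "b = z - y2"
  have na: "norm a \<le> R" and nb: "norm b \<le> R" using z unfolding a_def b_def by (auto simp: dist_norm norm_minus_commute)
  have zm: "z - (1/2) *\<^sub>R (y1 + y2) = (1/2) *\<^sub>R (a + b)"
  proof -
    have "(1/2) *\<^sub>R (a + b) = (1/2) *\<^sub>R (z + z) - (1/2) *\<^sub>R (y1 + y2)"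
      unfolding a_def b_def by (simp add: scaleR_right_diff_distrib[symmetric] algebra_simps)
    also have "(1/2::real) *\<^sub>R (z + z) = z" by (simp add: scaleR_2[symmetric])
    finally show ?thesis by simp
  qed
  have yy: "y1 - y2 = b - a" unfolding a_def b_def by simp
  have id: "norm ((1/2) *\<^sub>R (a + b))^2 + norm (b - a)^2 / 4 = (norm a^2 + norm b^2) / 2"
  proof -
    have 1: "inner a b = (norm (a + b)^2 - norm a^2 - norm b^2) / 2" by (rule dot_norm)
    have 2: "inner b a = (norm b^2 + norm a^2 - norm (b - a)^2) / 2" by (rule dot_norm_neg)
    have 3: "inner a b = inner b a" by (rule inner_commute)
    have 4: "norm ((1/2) *\<^sub>R (a + b))^2 = norm (a + b)^2 / 4"
      by (simp add: power_mult_distrib power2_eq_square)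
    have gen: "\<And>(X::real) (S::real) (Y::real) (A::real) (B::real) (i::real) (j::real). i = (S - A - B)/2 \<Longrightarrow> j = (B + A - Y)/2 \<Longrightarrow> i = j \<Longrightarrow> X = S/4 \<Longrightarrow> X + Y/4 = (A+B)/2"
      by (simp add: field_simps)
    show ?thesis using gen[OF 1 2 3 4] .
  qed
  have "t^2 \<le> norm (b - a)^2" using assms yy by (metis dist_norm power_mono)
  moreover have "norm a^2 \<le> R^2" "norm b^2 \<le> R^2" using na nb by (auto intro: power_mono)
  moreover have gen: "X \<le> R2 - T2/4" if "T2 \<le> Y" "A \<le> R2" "B \<le> R2" "X + Y/4 = (A+B)/2" for X Y A B T2 R2 :: real
    using that by argo
  ultimately have "norm ((1/2) *\<^sub>R (a + b))^2 \<le> R^2 - t^2/4" using id by blast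
  then have "norm ((1/2) *\<^sub>R (a + b)) \<le> sqrt (R^2 - t^2/4)" by (rule real_le_rsqrt)
  then show "z \<in> cball ((1/2) *\<^sub>R (y1 + y2)) (sqrt (R^2 - t^2/4))"
    using zm by (simp add: dist_norm norm_minus_commute)
qed

lemma unif_bound:
  assumes C: "C \<in> sets borel" "emeasure lborel C = ennreal V" "V > 0"
    and A: "A \<in> sets borel" "emeasure lborel A = ennreal a" "a \<ge> 0"
  shows "measure (uniform_measure lborel C) A \<le> a / V"
proof -
  have "measure (uniform_measure lborel C) A = measure lborel (C \<inter> A) / measure lborel C"
    using C A by (subst measure_uniform_measure) auto
  also have "measure lborel C = V" using C by (simp add: measure_def)
  also have "measure lborel (C \<inter> A) \<le> a"
  proof -
    have "emeasure lborel (C \<inter> A) \<le> emeasure lborel A" by (intro emeasure_mono) (use A in auto)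
    then have "emeasure lborel (C \<inter> A) \<le> ennreal a" using A by simp
    then show ?thesis using A by (simp add: measure_def enn2real_leI)
  qed
  finally show ?thesis using C by (simp add: divide_right_mono)
qed



lemma K109: "n \<ge> 1000 \<Longrightarrow> 96 * real n ^ 3 \<le> (109/100) ^ n"
proof (induction n rule: dec_induct)
  case base
  have "(109/100::real) ^ 10 \<ge> 2" by (simp add: power_numeral_reduce)
  then have "((109/100::real) ^ 10) ^ 100 \<ge> 2 ^ 100" by (rule power_mono) simp
  moreover have "(2::real) ^ 100 \<ge> 96 * 1000 ^ 3" by simp
  ultimately show ?case by (simp add: power_mult[symmetric])
next
  case (step m)
  have m: "real m \<ge> 1000" using step by simp
  have "96 * real (Suc m) ^ 3 = 96 * (real m + 1) ^ 3" by (simp add: add.commute)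
  also have "\<dots> \<le> 96 * ((109/100) * real m ^ 3)"
  proof -
    have "(real m + 1) ^ 3 = real m ^ 3 + 3 * real m ^ 2 + 3 * real m + 1" by (simp add: power3_eq_cube power2_eq_square algebra_simps)
    moreover have "3 * real m ^ 2 + 3 * real m + 1 \<le> 9/100 * real m ^ 3"
    proof -
      have "real m ^ 2 \<ge> 1000 * real m" using m by (simp add: power2_eq_square)
      moreover have "real m ^ 3 \<ge> 1000 * real m ^ 2" using m by (simp add: power2_eq_square power3_eq_cube)
      moreover have "real m \<ge> 1" using m by simp
      ultimately show ?thesis by linarith
    qed
    ultimately show ?thesis by simp
  qed
  also have "\<dots> = (109/100) * (96 * real m ^ 3)" by simp
  also have "\<dots> \<le> (109/100) * (109/100) ^ m" using step by simp
  finally show ?case by simp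
qed

lemma H44:
  fixes d :: real assumes d: "d \<ge> 1000"
  shows "44/10 * ln d \<le> sqrt d"
proof -
  define s where "s = sqrt d"
  have s1: "s \<ge> 316/10"
  proof -
    have "(316/10::real)^2 \<le> d" using d by (simp add: power2_eq_square)
    then have "sqrt ((316/10::real)^2) \<le> sqrt d" by (rule real_sqrt_le_mono)
    then show ?thesis unfolding s_def by simp
  qed
  have d_eq: "d = s^2" unfolding s_def using d by simp
  have lnd: "ln d = 2 * ln s" using s1 d_eq by (simp add: ln_realpow)
  have "ln s = ln 32 + ln (s / 32)" using s1 by (simp add: ln_div)
  also have "ln (s/32) \<le> s/32 - 1" using s1 by (intro ln_le_minus_one) simp
  also have "ln (32::real) = 5 * ln 2"
    using ln_realpow[of 2 5] by simp
  also have "\<dots> \<le> 5 * (25/36)" using ln2_le_25_over_36 by simp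
  finally have "ln s \<le> 5 * (25/36) + (s/32 - 1)" by simp
  then have "44/10 * ln d \<le> 44/10 * 2 * (5 * (25/36) + (s/32 - 1))" unfolding lnd by simp
  also have "\<dots> \<le> s" using s1 by simp
  finally show ?thesis unfolding s_def .
qed

lemma numerics:
  fixes n :: nat assumes n: "n \<ge> 1000"
  defines "d \<equiv> real n" and "Ld \<equiv> ln (real n)"
  defines "\<Delta> \<equiv> (sqrt d / (4 * Ld)) ^ n" and "L \<equiv> Ld ^ 2"
  shows "0 < Ld" "L < d" "0 < \<Delta>" "1 \<le> 3 * L / 8 - 1"
    "1 / 2 ^ n \<le> 1 / (6 * d)"
    "exp (- (\<Delta> / (16 * d ^ 2))) \<le> 1 / (6 * d)"
    "\<Delta> * 2 ^ n * exp (- (\<Delta> * exp (- L / 8)) * (3 * L / 8 - 1)) \<le> 1 / (6 * d)"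
proof -
  have d: "d \<ge> 1000" using n unfolding d_def by simp
  have ln2: "2/3 \<le> ln (2::real)" by (rule ln2_ge_two_thirds)
  have Ld16: "Ld \<ge> 8/3"
  proof -
    have "ln (16::real) = 4 * ln 2" using ln_realpow[of 2 4] by simp
    moreover have "ln (16::real) \<le> Ld" unfolding Ld_def using d d_def by simp
    ultimately show ?thesis using ln2 by simp
  qed
  show Ld0: "0 < Ld" using Ld16 by simp
  have H: "44/10 * Ld \<le> sqrt d" using H44[OF d] unfolding Ld_def d_def .
  have sq: "sqrt d ^ 2 = d" using d by simp
  have L_le: "L \<le> d * 25 / 484" 
  proof -
    have "(44/10 * Ld)^2 \<le> sqrt d ^ 2" using H Ld0 by (intro power_mono) auto
    then have "(44/10)^2 * L \<le> d" unfolding L_def sq by (simp add: power2_eq_square algebra_simps)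
    moreover have "0 \<le> L" unfolding L_def by simp
    ultimately show ?thesis by (simp add: power2_eq_square)
  qed
  show "L < d" using L_le d by simp
  have L3: "L \<ge> 64/9" unfolding L_def using Ld16 power_mono[OF Ld16, of 2] by (simp add: power2_eq_square)
  show "1 \<le> 3 * L / 8 - 1" using L3 by simp
  define A where "A = sqrt d / (4 * Ld)"
  have A11: "A \<ge> 11/10" unfolding A_def using H Ld0 by (simp add: field_simps)
  have Dge: "\<Delta> \<ge> (11/10) ^ n" unfolding \<Delta>_def A_def[symmetric] using A11 by (intro power_mono) auto
  show D0: "0 < \<Delta>" using Dge by (rule less_le_trans[rotated]) simp
  have K: "96 * d ^ 3 \<le> (109/100) ^ n" unfolding d_def by (rule K109[OF n])
  have "(109/100::real) ^ n \<le> 2 ^ n" by (intro power_mono) auto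
  moreover have "6 * d \<le> 96 * d ^ 3"
  proof -
    have "1 * 1 \<le> d * d" using d by (intro mult_mono) auto
    then have "1 \<le> d ^ 2" by (simp add: power2_eq_square)
    then have "d * 1 \<le> d * d^2" using d by (intro mult_left_mono) auto
    then have "d \<le> d ^ 3" by (simp add: power2_eq_square power3_eq_cube)
    then show ?thesis using d by linarith
  qed
  ultimately have "6 * d \<le> 2 ^ n" using K by linarith
  then show "1 / 2 ^ n \<le> 1 / (6 * d)" using d by (intro divide_left_mono) auto
  have "(109/100::real) ^ n \<le> (11/10) ^ n" by (intro power_mono) auto
  then have D96: "96 * d ^ 3 \<le> \<Delta>" using K Dge by simp
  have e6: "6 * d \<le> exp (6 * d)" using exp_ge_add_one_self[of "6*d"] by linarith
  have "6 * d \<le> \<Delta> / (16 * d ^ 2)"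
  proof -
    have "6 * d * (16 * d^2) = 96 * d ^ 3" by (simp add: power2_eq_square power3_eq_cube)
    then show ?thesis using D96 d by (simp add: field_simps)
  qed
  then have "exp (- (\<Delta> / (16 * d ^ 2))) \<le> exp (- (6 * d))" by simp
  also have "\<dots> = 1 / exp (6 * d)" by (simp add: exp_minus field_simps)
  also have "\<dots> \<le> 1 / (6 * d)" using e6 d by (intro divide_left_mono) auto
  finally show "exp (- (\<Delta> / (16 * d ^ 2))) \<le> 1 / (6 * d)" .
  have eL: "exp (L / 8) \<le> (10066/10000) ^ n"
  proof -
    have "L / 8 \<le> d / 154" using L_le d by linarith
    then have "exp (L / 8) \<le> exp (d / 154)" by simp
    also have "d / 154 = real n * (1/154)" unfolding d_def by simp
    also have "exp (real n * (1/154)) = exp (1/154) ^ n" by (rule exp_of_nat_mult)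
    also have "exp (1/154::real) \<le> 1 + 1/154 + (1/154)^2" by (rule exp_bound) auto
    then have "exp (1/154::real) ^ n \<le> (1 + 1/154 + (1/154)^2) ^ n" by (intro power_mono) auto
    also have "(1 + 1/154 + (1/154)^2 :: real) ^ n \<le> (10066/10000) ^ n" by (intro power_mono) (auto simp: power2_eq_square)
    finally show ?thesis by simp
  qed
  have "(109/100 * (10066/10000)::real) ^ n \<le> (11/10) ^ n" by (intro power_mono) auto
  then have P: "(109/100::real) ^ n * (10066/10000) ^ n \<le> (11/10) ^ n" by (simp only: power_mult_distrib)
  have "96 * d ^ 3 * exp (L / 8) \<le> (109/100::real) ^ n * (10066/10000) ^ n"
    using K eL d by (intro mult_mono) auto
  then have "96 * d ^ 3 * exp (L / 8) \<le> \<Delta>" using P Dge by linarith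
  then have tau: "96 * d ^ 3 \<le> \<Delta> * exp (- L / 8)"
    by (simp add: exp_minus field_simps)
  define \<tau> where "\<tau> = \<Delta> * exp (- L / 8)"
  have tau0: "0 \<le> \<tau>" unfolding \<tau>_def using D0 by simp
  have "\<tau> \<le> \<tau> * (3 * L / 8 - 1)" using tau0 \<open>1 \<le> 3 * L / 8 - 1\<close> by (simp add: mult_le_cancel_left1)
  then have e1: "exp (- \<tau> * (3 * L / 8 - 1)) \<le> exp (- \<tau>)" by simp
  have "\<Delta> * 2 ^ n * (6 * d) \<le> exp \<tau>"
  proof -
    have Ale: "sqrt d / (4 * Ld) \<le> d"
    proof -
      have "d * 1 \<le> d * d" using d by (intro mult_left_mono) auto
      then have "sqrt d \<le> sqrt (d * d)" by (intro real_sqrt_le_mono) simp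
      then have "sqrt d \<le> d" using d by simp
      moreover have "1 \<le> 4 * Ld" using Ld16 by simp
      have "sqrt d / (4 * Ld) \<le> sqrt d / 1" using \<open>1 \<le> 4 * Ld\<close> d by (intro divide_left_mono) auto
      then show ?thesis using \<open>sqrt d \<le> d\<close> by simp
    qed
    have "\<Delta> \<le> d ^ n" unfolding \<Delta>_def using Ale Ld0 d by (intro power_mono) auto
    also have "d ^ n = exp (d * ln d)" using d unfolding d_def by (simp add: exp_of_nat_mult powr_def[symmetric] powr_realpow)
    also have "\<dots> \<le> exp (d * d)"
    proof -
      have "ln d \<le> d - 1" using d by (intro ln_le_minus_one) auto
      then have "d * ln d \<le> d * d" using d by (intro mult_left_mono) auto
      then show ?thesis by simp
    qed
    finally have a1: "\<Delta> \<le> exp (d * d)" .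
    have a2: "(2::real) ^ n \<le> exp d"
    proof -
      have "(2::real) ^ n \<le> exp 1 ^ n" using exp_ge_add_one_self[of 1] by (intro power_mono) auto
      then show ?thesis by (simp add: exp_of_nat_mult[symmetric] d_def)
    qed
    have "\<Delta> * 2 ^ n * (6 * d) \<le> exp (d * d) * exp d * exp (6 * d)"
      using a1 a2 e6 D0 d by (intro mult_mono) auto
    also have "\<dots> = exp (d * d + 7 * d)" by (simp add: exp_add[symmetric] algebra_simps)
    also have "\<dots> \<le> exp \<tau>"
    proof -
      have "d * d + 7 * d \<le> 8 * (d * d)" using d by simp
      also have "\<dots> \<le> 96 * d ^ 3" using d by (simp add: power3_eq_cube)
      finally show ?thesis using tau unfolding \<tau>_def by simp
    qed
    finally show ?thesis .
  qed
  then have "\<Delta> * 2 ^ n \<le> exp \<tau> / (6 * d)" using d by (simp add: field_simps)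
  then have "\<Delta> * 2 ^ n * exp (- \<tau>) \<le> exp \<tau> / (6 * d) * exp (- \<tau>)" by (intro mult_right_mono) auto
  also have "\<dots> = 1 / (6 * d)" by (simp add: exp_minus field_simps)
  finally have "\<Delta> * 2 ^ n * exp (- \<tau>) \<le> 1 / (6 * d)" .
  moreover have "\<Delta> * 2 ^ n * exp (- \<tau> * (3 * L / 8 - 1)) \<le> \<Delta> * 2 ^ n * exp (- \<tau>)"
    using e1 D0 by (intro mult_left_mono) auto
  ultimately show "\<Delta> * 2 ^ n * exp (- (\<Delta> * exp (- L / 8)) * (3 * L / 8 - 1)) \<le> 1 / (6 * d)"
    unfolding \<tau>_def by simp
qed



context
  fixes M :: "'a::euclidean_space measure"
  assumes pM: "prob_space M" and sM: "sets M = sets borel"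
begin

lemma sM_cong[measurable_cong]: "sets M = sets borel" by (fact sM)

lemma comp_meas: "l \<in> I \<Longrightarrow> (\<lambda>x. x l) \<in> borel_measurable (PiM I (\<lambda>_. M))"
  using measurable_component_singleton[of l I "\<lambda>_. M"] sM measurable_cong_sets by blast

lemma meas_dist: "i \<in> I \<Longrightarrow> j \<in> I \<Longrightarrow> (\<lambda>x. dist (x i) (x j)) \<in> borel_measurable (PiM I (\<lambda>_. M))"
  by (intro borel_measurable_dist comp_meas)

lemma meas_dist1: "j \<in> I \<Longrightarrow> (\<lambda>x. dist y (x j)) \<in> borel_measurable (PiM I (\<lambda>_. M))"
  by (intro borel_measurable_dist comp_meas) auto

lemma meas_ind:
  assumes "i \<in> I" "l \<in> I"
  shows "(\<lambda>x. indicator (cball (x i) R) (x l) :: real) \<in> borel_measurable (PiM I (\<lambda>_. M))"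
proof -
  note [measurable] = meas_dist[OF assms]
  show ?thesis by (simp add: indicator_def mem_cball)
qed

lemma meas_ind2:
  assumes "i \<in> I" "j \<in> I" "l \<in> I"
  shows "(\<lambda>x. indicator (cball (x i) R \<inter> cball (x j) R) (x l) :: real) \<in> borel_measurable (PiM I (\<lambda>_. M))"
proof -
  note [measurable] = meas_dist[OF assms(1,3)] meas_dist[OF assms(2,3)]
  show ?thesis by (simp add: indicator_def mem_cball)
qed

lemma meas_ind1:
  assumes "j \<in> I" "l \<in> I"
  shows "(\<lambda>x. indicator (cball y R \<inter> cball (x j) R) (x l) :: real) \<in> borel_measurable (PiM I (\<lambda>_. M))"
proof -
  note [measurable] = meas_dist[OF assms(1,2)] meas_dist1[OF assms(2)]
  show ?thesis by (simp add: indicator_def mem_cball)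
qed

lemma L_split:
  assumes "finite I" "i \<in> I"
    and F[measurable]: "F \<in> borel_measurable (PiM I (\<lambda>_. M))"
  shows "(\<integral>\<^sup>+\<omega>. F \<omega> \<partial>PiM I (\<lambda>_. M)) =
     (\<integral>\<^sup>+y. (\<integral>\<^sup>+x. F (x(i := y)) \<partial>PiM (I - {i}) (\<lambda>_. M)) \<partial>M)"
proof -
  interpret product_sigma_finite "\<lambda>_. M"
    by (simp add: product_sigma_finite_def prob_space_imp_sigma_finite[OF pM])
  have I: "insert i (I - {i}) = I" using assms by auto
  show ?thesis
    using product_nn_integral_insert_rev[of "I - {i}" i F] assms I by simp
qed

lemma L_exp:
  assumes "finite J" "A \<in> sets borel" "measure M A \<le> p" "0 \<le> s"
  shows "(\<integral>\<^sup>+x. ennreal (exp (s * (\<Sum>l\<in>J. indicator A (x l)))) \<partial>PiM J (\<lambda>_. M))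
      \<le> ennreal (exp ((exp s - 1) * p * card J))"
proof -
  interpret prob_space M by (fact pM)
  interpret product_sigma_finite "\<lambda>_. M"
    by (simp add: product_sigma_finite_def prob_space_imp_sigma_finite[OF pM])
  have AM: "A \<in> sets M" using assms sM by simp
  have eq1: "\<And>x. ennreal (exp (s * (\<Sum>l\<in>J. indicator A (x l)))) = (\<Prod>l\<in>J. ennreal (exp (s * indicator A (x l))))"
    proof -
    fix x
    have "exp (s * (\<Sum>l\<in>J. indicator A (x l))) = (\<Prod>l\<in>J. exp (s * indicator A (x l)))"
      unfolding sum_distrib_left using assms(1) by (rule exp_sum)
    then show "?thesis x" by (simp add: prod_ennreal)
  qed
  have "(\<integral>\<^sup>+x. ennreal (exp (s * (\<Sum>l\<in>J. indicator A (x l)))) \<partial>PiM J (\<lambda>_. M))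
      = (\<Prod>l\<in>J. (\<integral>\<^sup>+z. ennreal (exp (s * indicator A z)) \<partial>M))"
    unfolding eq1 using assms AM by (subst product_nn_integral_prod) auto
  also have "\<dots> = (\<Prod>l\<in>J. ennreal (1 + (exp s - 1) * measure M A))"
  proof (rule prod.cong[OF refl])
    fix l
    have e1: "ennreal (exp s) = 1 + ennreal (exp s - 1)"
      using ennreal_plus[of 1 "exp s - 1"] assms by simp
    have "(\<integral>\<^sup>+z. ennreal (exp (s * indicator A z)) \<partial>M) = (\<integral>\<^sup>+z. 1 + ennreal (exp s - 1) * indicator A z \<partial>M)"
      by (intro nn_integral_cong) (auto simp: indicator_def e1)
    also have "\<dots> = 1 + ennreal (exp s - 1) * emeasure M A"
      using AM by (subst nn_integral_add) (auto simp: nn_integral_cmult_indicator emeasure_space_1)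
    also have "\<dots> = ennreal (1 + (exp s - 1) * measure M A)"
      using assms ennreal_plus[of 1 "(exp s - 1) * measure M A"] ennreal_mult[of "exp s - 1" "measure M A"]
      by (simp add: emeasure_eq_measure)
    finally show "(\<integral>\<^sup>+z. ennreal (exp (s * indicator A z)) \<partial>M) = ennreal (1 + (exp s - 1) * measure M A)" .
  qed
  also have "\<dots> = ennreal ((1 + (exp s - 1) * measure M A) ^ card J)"
  proof -
    have "0 \<le> 1 + (exp s - 1) * measure M A"
      using assms by (auto intro!: add_nonneg_nonneg mult_nonneg_nonneg)
    then show ?thesis by (simp add: ennreal_power prod_constant)
  qed
  also have "\<dots> \<le> ennreal (exp ((exp s - 1) * p) ^ card J)"
  proof (intro ennreal_leI power_mono)
    have "(exp s - 1) * measure M A \<le> (exp s - 1) * p"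
      using assms by (intro mult_left_mono) auto
    moreover have "1 + (exp s - 1) * p \<le> exp ((exp s - 1) * p)"
      using exp_ge_add_one_self[of "(exp s - 1) * p"] by linarith
    ultimately show "1 + (exp s - 1) * measure M A \<le> exp ((exp s - 1) * p)" by linarith
    show "0 \<le> 1 + (exp s - 1) * measure M A"
      using assms by (intro add_nonneg_nonneg mult_nonneg_nonneg) auto
  qed
  also have "\<dots> = ennreal (exp ((exp s - 1) * p * card J))"
    by (simp add: exp_of_nat_mult[symmetric] mult.commute)
  finally show ?thesis .
qed

lemma L_constPi: "(\<integral>\<^sup>+x. c \<partial>PiM J (\<lambda>_. M)) = c"
proof -
  interpret P: prob_space "PiM J (\<lambda>_. M)"
    by (intro prob_space_PiM) (simp add: pM)
  show ?thesis by (simp add: P.emeasure_space_1)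
qed

lemma L_constM: "(\<integral>\<^sup>+x. c \<partial>M) = c"
proof -
  interpret prob_space M by (fact pM)
  show ?thesis by (simp add: emeasure_space_1)
qed

lemma L_deg:
  assumes fin: "finite I" and iI: "i \<in> I" and s: "0 \<le> s" and p: "\<And>y. measure M (cball y R) \<le> p"
  shows "(\<integral>\<^sup>+\<omega>. (if T \<le> (\<Sum>l\<in>I-{i}. indicator (cball (\<omega> i) R) (\<omega> l)) then 1 else 0) \<partial>PiM I (\<lambda>_. M))
     \<le> ennreal (exp ((exp s - 1) * p * real (card I - 1) - s * T))"
proof -
  define S where "S \<omega> = (\<Sum>l\<in>I-{i}. indicator (cball (\<omega> i) R) (\<omega> l) :: real)" for \<omega> :: "'b \<Rightarrow> 'a"
  have Smeas[measurable]: "(\<lambda>\<omega>. ennreal (exp (s * S \<omega>))) \<in> borel_measurable (PiM I (\<lambda>_. M))"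
  proof -
    have [measurable]: "(\<lambda>\<omega>. S \<omega>) \<in> borel_measurable (PiM I (\<lambda>_. M))"
      unfolding S_def using iI by (intro borel_measurable_sum meas_ind) auto
    show ?thesis by measurable
  qed
  have "(\<integral>\<^sup>+\<omega>. (if T \<le> S \<omega> then 1 else 0) \<partial>PiM I (\<lambda>_. M))
      \<le> (\<integral>\<^sup>+\<omega>. ennreal (exp (- s * T)) * ennreal (exp (s * S \<omega>)) \<partial>PiM I (\<lambda>_. M))"
  proof (rule nn_integral_mono)
    fix \<omega> :: "'b \<Rightarrow> 'a"
    show "(if T \<le> S \<omega> then 1 else 0) \<le> ennreal (exp (- s * T)) * ennreal (exp (s * S \<omega>))"
    proof (cases "T \<le> S \<omega>")
      case True
      then have "s * T \<le> s * S \<omega>" using s by (intro mult_left_mono) auto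
      then have "1 \<le> exp (- s * T) * exp (s * S \<omega>)"
        by (simp add: exp_add[symmetric])
      then show ?thesis using True by (simp add: ennreal_mult[symmetric])
    qed simp
  qed
  also have "\<dots> = ennreal (exp (- s * T)) * (\<integral>\<^sup>+\<omega>. ennreal (exp (s * S \<omega>)) \<partial>PiM I (\<lambda>_. M))"
    by (rule nn_integral_cmult) (fact Smeas)
  also have "(\<integral>\<^sup>+\<omega>. ennreal (exp (s * S \<omega>)) \<partial>PiM I (\<lambda>_. M))
      = (\<integral>\<^sup>+y. (\<integral>\<^sup>+x. ennreal (exp (s * S (x(i := y)))) \<partial>PiM (I - {i}) (\<lambda>_. M)) \<partial>M)"
    by (rule L_split[OF fin iI Smeas])
  also have "\<dots> = (\<integral>\<^sup>+y. (\<integral>\<^sup>+x. ennreal (exp (s * (\<Sum>l\<in>I-{i}. indicator (cball y R) (x l)))) \<partial>PiM (I - {i}) (\<lambda>_. M)) \<partial>M)"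
    unfolding S_def by (intro nn_integral_cong sum.cong arg_cong[where f=ennreal] arg_cong[where f=exp] arg_cong[where f="(*) s"]) auto
  also have "\<dots> \<le> (\<integral>\<^sup>+y. ennreal (exp ((exp s - 1) * p * card (I - {i}))) \<partial>M)"
    using fin s p by (intro nn_integral_mono L_exp) auto
  also have "\<dots> = ennreal (exp ((exp s - 1) * p * card (I - {i})))" by (rule L_constM)
  finally have "(\<integral>\<^sup>+\<omega>. (if T \<le> S \<omega> then 1 else 0) \<partial>PiM I (\<lambda>_. M))
      \<le> ennreal (exp (- s * T)) * ennreal (exp ((exp s - 1) * p * card (I - {i})))"
    by (simp add: mult_left_mono)
  also have "\<dots> = ennreal (exp ((exp s - 1) * p * real (card I - 1) - s * T))"
    using fin iI by (simp add: ennreal_mult[symmetric] exp_add[symmetric] card_Diff_singleton)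
  finally show ?thesis unfolding S_def .
qed

lemma L_pair:
  assumes fin: "finite I" and iI: "i \<in> I" and jI: "j \<in> I" and ij: "i \<noteq> j" and s: "0 \<le> s"
    and q: "\<And>y1 y2. t \<le> dist y1 y2 \<Longrightarrow> measure M (cball y1 R \<inter> cball y2 R) \<le> q"
    and q2: "\<And>y. measure M (cball y (2 * R)) \<le> q2"
  shows "(\<integral>\<^sup>+\<omega>. (if t \<le> dist (\<omega> i) (\<omega> j) \<and> dist (\<omega> i) (\<omega> j) \<le> 2 * R \<and>
        T \<le> (\<Sum>l\<in>I-{i,j}. indicator (cball (\<omega> i) R \<inter> cball (\<omega> j) R) (\<omega> l)) then 1 else 0) \<partial>PiM I (\<lambda>_. M))
     \<le> ennreal (q2 * exp ((exp s - 1) * q * real (card I - 2) - s * T))"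
proof -
  interpret prob_space M by (fact pM)
  define S where "S y1 y2 x = (\<Sum>l\<in>I-{i,j}. indicator (cball y1 R \<inter> cball y2 R) (x l) :: real)"
    for y1 y2 :: 'a and x :: "'b \<Rightarrow> 'a"
  define C where "C y1 y2 \<longleftrightarrow> t \<le> dist y1 y2 \<and> dist y1 y2 \<le> 2 * R" for y1 y2 :: 'a
  define E0 where "E0 = exp ((exp s - 1) * q * real (card I - 2))"
  have E0: "0 \<le> E0" unfolding E0_def by simp
  have Gmeas[measurable]: "(\<lambda>\<omega>. ennreal (if C (\<omega> i) (\<omega> j) then exp (s * S (\<omega> i) (\<omega> j) \<omega>) else 0)) \<in> borel_measurable (PiM I (\<lambda>_. M))"
  proof -
    have [measurable]: "(\<lambda>\<omega>. S (\<omega> i) (\<omega> j) \<omega>) \<in> borel_measurable (PiM I (\<lambda>_. M))"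
      unfolding S_def using iI jI by (intro borel_measurable_sum meas_ind2) auto
    note [measurable] = meas_dist[OF iI jI]
    show ?thesis unfolding C_def by measurable
  qed
  have G1meas[measurable]: "(\<lambda>x. ennreal (if C y1 (x j) then exp (s * S y1 (x j) x) else 0)) \<in> borel_measurable (PiM (I - {i}) (\<lambda>_. M))" for y1
  proof -
    have [measurable]: "(\<lambda>x. S y1 (x j) x) \<in> borel_measurable (PiM (I - {i}) (\<lambda>_. M))"
      unfolding S_def using iI jI ij by (intro borel_measurable_sum meas_ind1) auto
    have jI'': "j \<in> I - {i}" using jI ij by auto
    note [measurable] = meas_dist1[OF jI'', of y1]
    show ?thesis unfolding C_def using jI ij by measurable
  qed
  have "(\<integral>\<^sup>+\<omega>. (if C (\<omega> i) (\<omega> j) \<and> T \<le> S (\<omega> i) (\<omega> j) \<omega> then 1 else 0) \<partial>PiM I (\<lambda>_. M))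
      \<le> (\<integral>\<^sup>+\<omega>. ennreal (exp (- s * T)) * ennreal (if C (\<omega> i) (\<omega> j) then exp (s * S (\<omega> i) (\<omega> j) \<omega>) else 0) \<partial>PiM I (\<lambda>_. M))"
  proof (rule nn_integral_mono)
    fix \<omega> :: "'b \<Rightarrow> 'a"
    show "(if C (\<omega> i) (\<omega> j) \<and> T \<le> S (\<omega> i) (\<omega> j) \<omega> then 1 else 0) \<le> ennreal (exp (- s * T)) * ennreal (if C (\<omega> i) (\<omega> j) then exp (s * S (\<omega> i) (\<omega> j) \<omega>) else 0)"
    proof (cases "C (\<omega> i) (\<omega> j) \<and> T \<le> S (\<omega> i) (\<omega> j) \<omega>")
      case True
      then have "s * T \<le> s * S (\<omega> i) (\<omega> j) \<omega>" using s by (intro mult_left_mono) auto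
      then have "1 \<le> exp (- s * T) * exp (s * S (\<omega> i) (\<omega> j) \<omega>)"
        by (simp add: exp_add[symmetric])
      then show ?thesis using True by (simp add: ennreal_mult[symmetric])
    qed auto
  qed
  also have "\<dots> = ennreal (exp (- s * T)) * (\<integral>\<^sup>+\<omega>. ennreal (if C (\<omega> i) (\<omega> j) then exp (s * S (\<omega> i) (\<omega> j) \<omega>) else 0) \<partial>PiM I (\<lambda>_. M))"
    by (rule nn_integral_cmult) (fact Gmeas)
  also have "(\<integral>\<^sup>+\<omega>. ennreal (if C (\<omega> i) (\<omega> j) then exp (s * S (\<omega> i) (\<omega> j) \<omega>) else 0) \<partial>PiM I (\<lambda>_. M))
     = (\<integral>\<^sup>+y1. (\<integral>\<^sup>+x. ennreal (if C y1 (x j) then exp (s * S y1 (x j) x) else 0) \<partial>PiM (I - {i}) (\<lambda>_. M)) \<partial>M)"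
    apply (subst L_split[OF fin iI Gmeas])
    using ij unfolding S_def
    by (intro nn_integral_cong arg_cong[where f=ennreal] if_cong refl arg_cong[where f=exp] arg_cong[where f="(*) s"] sum.cong) auto
  also have "\<dots> \<le> (\<integral>\<^sup>+y1. ennreal (E0 * q2) \<partial>M)"
  proof (rule nn_integral_mono)
    fix y1
    have fin': "finite (I - {i})" and jI': "j \<in> I - {i}" using fin jI ij by auto
    have "(\<integral>\<^sup>+x. ennreal (if C y1 (x j) then exp (s * S y1 (x j) x) else 0) \<partial>PiM (I - {i}) (\<lambda>_. M))
      = (\<integral>\<^sup>+y2. (\<integral>\<^sup>+x. ennreal (if C y1 y2 then exp (s * S y1 y2 x) else 0) \<partial>PiM (I - {i} - {j}) (\<lambda>_. M)) \<partial>M)"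
      apply (subst L_split[OF fin' jI' G1meas])
      unfolding S_def
      by (intro nn_integral_cong arg_cong[where f=ennreal] if_cong refl arg_cong[where f=exp] arg_cong[where f="(*) s"] sum.cong) auto
    also have "\<dots> \<le> (\<integral>\<^sup>+y2. ennreal E0 * indicator (cball y1 (2 * R)) y2 \<partial>M)"
    proof (rule nn_integral_mono)
      fix y2
      show "(\<integral>\<^sup>+x. ennreal (if C y1 y2 then exp (s * S y1 y2 x) else 0) \<partial>PiM (I - {i} - {j}) (\<lambda>_. M))
          \<le> ennreal E0 * indicator (cball y1 (2 * R)) y2"
      proof (cases "C y1 y2")
        case True
        have eqJ: "I - {i} - {j} = I - {i, j}" by auto
        have "(\<integral>\<^sup>+x. ennreal (exp (s * S y1 y2 x)) \<partial>PiM (I - {i} - {j}) (\<lambda>_. M))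
            \<le> ennreal (exp ((exp s - 1) * q * card (I - {i} - {j})))"
          unfolding S_def eqJ using fin s q True unfolding C_def
          by (intro L_exp) auto
        also have "card (I - {i} - {j}) = card I - 2"
          using fin iI jI ij by (simp add: card_Diff_singleton)
        finally show ?thesis using True unfolding E0_def by (simp add: mem_cball C_def)
      next
        case False
        then show ?thesis by simp
      qed
    qed
    also have "\<dots> = ennreal E0 * emeasure M (cball y1 (2 * R))"
      using sM by (subst nn_integral_cmult_indicator) auto
    also have "\<dots> \<le> ennreal (E0 * q2)"
      using q2[of y1] E0 by (simp add: emeasure_eq_measure ennreal_mult[symmetric] mult_left_mono ennreal_leI)
    finally show "(\<integral>\<^sup>+x. ennreal (if C y1 (x j) then exp (s * S y1 (x j) x) else 0) \<partial>PiM (I - {i}) (\<lambda>_. M)) \<le> ennreal (E0 * q2)" .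
  qed
  also have "\<dots> = ennreal (E0 * q2)" by (rule L_constM)
  finally have "(\<integral>\<^sup>+\<omega>. (if C (\<omega> i) (\<omega> j) \<and> T \<le> S (\<omega> i) (\<omega> j) \<omega> then 1 else 0) \<partial>PiM I (\<lambda>_. M))
     \<le> ennreal (exp (- s * T)) * ennreal (E0 * q2)"
    by (simp add: mult_left_mono)
  also have "\<dots> = ennreal (exp (- s * T) * (E0 * q2))"
  proof -
    have q2nn: "0 \<le> q2" using q2[of undefined] measure_nonneg[of M] order_trans by blast
    show ?thesis using E0 q2nn by (simp add: ennreal_mult)
  qed
  also have "exp (- s * T) * (E0 * q2) = q2 * exp ((exp s - 1) * q * real (card I - 2) - s * T)"
    unfolding E0_def by (simp add: exp_add[symmetric])
  finally show ?thesis unfolding S_def C_def by (simp add: conj_assoc)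
qed

lemma L_close:
  assumes fin: "finite I" and iI: "i \<in> I" and jI: "j \<in> I" and ij: "i \<noteq> j"
    and qc: "\<And>y. measure M (ball y t) \<le> qc"
  shows "(\<integral>\<^sup>+\<omega>. (if dist (\<omega> i) (\<omega> j) < t then 1 else 0) \<partial>PiM I (\<lambda>_. M)) \<le> ennreal qc"
proof -
  interpret prob_space M by (fact pM)
  have Gmeas[measurable]: "(\<lambda>\<omega>. (if dist (\<omega> i) (\<omega> j) < t then 1 else 0) :: ennreal) \<in> borel_measurable (PiM I (\<lambda>_. M))"
  proof -
    note [measurable] = meas_dist[OF iI jI]
    show ?thesis by measurable
  qed
  have G1meas[measurable]: "(\<lambda>x. (if dist y1 (x j) < t then 1 else 0) :: ennreal) \<in> borel_measurable (PiM (I - {i}) (\<lambda>_. M))" for y1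
  proof -
    have jI'': "j \<in> I - {i}" using jI ij by auto
    note [measurable] = meas_dist1[OF jI'', of y1]
    show ?thesis using jI ij by measurable
  qed
  have "(\<integral>\<^sup>+\<omega>. (if dist (\<omega> i) (\<omega> j) < t then 1 else 0) \<partial>PiM I (\<lambda>_. M))
     = (\<integral>\<^sup>+y1. (\<integral>\<^sup>+x. (if dist y1 (x j) < t then 1 else 0) \<partial>PiM (I - {i}) (\<lambda>_. M)) \<partial>M)"
    apply (subst L_split[OF fin iI Gmeas])
    using ij by (intro nn_integral_cong) auto
  also have "\<dots> \<le> (\<integral>\<^sup>+y1. ennreal qc \<partial>M)"
  proof (rule nn_integral_mono)
    fix y1
    have fin': "finite (I - {i})" and jI': "j \<in> I - {i}" using fin jI ij by auto
    have "(\<integral>\<^sup>+x. (if dist y1 (x j) < t then 1 else 0) \<partial>PiM (I - {i}) (\<lambda>_. M))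
      = (\<integral>\<^sup>+y2. (\<integral>\<^sup>+x. (if dist y1 y2 < t then 1 else 0) \<partial>PiM (I - {i} - {j}) (\<lambda>_. M)) \<partial>M)"
      by (subst L_split[OF fin' jI' G1meas]) auto
    also have "\<dots> = (\<integral>\<^sup>+y2. indicator (ball y1 t) y2 \<partial>M)"
    proof -
      interpret P: prob_space "PiM (I - {i} - {j}) (\<lambda>_. M)"
        by (intro prob_space_PiM) (simp add: pM)
      show ?thesis by (intro nn_integral_cong) (simp add: P.emeasure_space_1 indicator_def mem_ball)
    qed
    also have "\<dots> = emeasure M (ball y1 t)"
      using sM by (subst nn_integral_indicator) auto
    also have "\<dots> \<le> ennreal qc"
      using qc[of y1] by (simp add: emeasure_eq_measure ennreal_leI)
    finally show "(\<integral>\<^sup>+x. (if dist y1 (x j) < t then 1 else 0) \<partial>PiM (I - {i}) (\<lambda>_. M)) \<le> ennreal qc" .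
  qed
  also have "\<dots> = ennreal qc" by (rule L_constM)
  finally show ?thesis .
qed

lemma meas_if_le:
  fixes f :: "_ \<Rightarrow> real"
  assumes [measurable]: "f \<in> borel_measurable N"
  shows "(\<lambda>\<omega>. (if T \<le> f \<omega> then 1 else 0) :: ennreal) \<in> borel_measurable N"
  by measurable

lemma meas_if_le3:
  fixes f g :: "_ \<Rightarrow> real"
  assumes [measurable]: "f \<in> borel_measurable N" "g \<in> borel_measurable N"
  shows "(\<lambda>\<omega>. (if t \<le> g \<omega> \<and> g \<omega> \<le> 2 * R \<and> T \<le> f \<omega> then 1 else 0) :: ennreal) \<in> borel_measurable N"
  by measurable

lemma meas_close_f:
  assumes "i \<in> I" "j \<in> I"
  shows "(\<lambda>\<omega>. (if dist (\<omega> i) (\<omega> j) < t then 1 else 0) :: ennreal) \<in> borel_measurable (PiM I (\<lambda>_. M))"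
proof -
  note [measurable] = meas_dist[OF assms]
  show ?thesis by measurable
qed

lemma meas_deg_f:
  assumes "i \<in> I"
  shows "(\<lambda>\<omega>. (if (T::real) \<le> (\<Sum>l\<in>I-{i}. indicator (cball (\<omega> i) R) (\<omega> l)) then 1 else 0) :: ennreal) \<in> borel_measurable (PiM I (\<lambda>_. M))"
proof -
  have "(\<lambda>\<omega>. (\<Sum>l\<in>I-{i}. indicator (cball (\<omega> i) R) (\<omega> l) :: real)) \<in> borel_measurable (PiM I (\<lambda>_. M))"
    using assms by (intro borel_measurable_sum meas_ind) auto
  then show ?thesis by (rule meas_if_le)
qed

lemma meas_pair_f:
  assumes "i \<in> I" "j \<in> I"
  shows "(\<lambda>\<omega>. (if t \<le> dist (\<omega> i) (\<omega> j) \<and> dist (\<omega> i) (\<omega> j) \<le> 2 * R \<and>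
        (T::real) \<le> (\<Sum>l\<in>I-{i,j}. indicator (cball (\<omega> i) R \<inter> cball (\<omega> j) R) (\<omega> l)) then 1 else 0) :: ennreal) \<in> borel_measurable (PiM I (\<lambda>_. M))"
proof -
  have "(\<lambda>\<omega>. (\<Sum>l\<in>I-{i,j}. indicator (cball (\<omega> i) R \<inter> cball (\<omega> j) R) (\<omega> l) :: real)) \<in> borel_measurable (PiM I (\<lambda>_. M))"
    using assms by (intro borel_measurable_sum meas_ind2) auto
  then show ?thesis by (rule meas_if_le3[OF _ meas_dist[OF assms]])
qed

lemma meas_out_f:
  assumes "i \<in> I" "C \<in> sets borel"
  shows "(\<lambda>\<omega>. indicator (- C) (\<omega> i) :: ennreal) \<in> borel_measurable (PiM I (\<lambda>_. M))"
proof -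
  note [measurable] = comp_meas[OF assms(1)]
  have [measurable]: "- C \<in> sets borel" using assms by auto
  show ?thesis by measurable
qed

lemma L_out:
  assumes fin: "finite I" and iI: "i \<in> I" and C: "C \<in> sets borel" and C0: "emeasure M (- C) = 0"
  shows "(\<integral>\<^sup>+\<omega>. indicator (- C) (\<omega> i) \<partial>PiM I (\<lambda>_. M)) = 0"
proof -
  have "(\<integral>\<^sup>+\<omega>. indicator (- C) (\<omega> i) \<partial>PiM I (\<lambda>_. M))
      = (\<integral>\<^sup>+y. (\<integral>\<^sup>+x. indicator (- C) ((x(i := y)) i) \<partial>PiM (I - {i}) (\<lambda>_. M)) \<partial>M)"
    by (rule L_split[OF fin iI meas_out_f[OF iI C]])
  also have "\<dots> = (\<integral>\<^sup>+y. indicator (- C) y \<partial>M)"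
  proof -
    interpret P: prob_space "PiM (I - {i}) (\<lambda>_. M)"
      by (intro prob_space_PiM) (simp add: pM)
    show ?thesis by (simp add: P.emeasure_space_1)
  qed
  also have "\<dots> = emeasure M (- C)"
    using C sM by (subst nn_integral_indicator) auto
  finally show ?thesis using C0 by simp
qed

end

lemma sum_ind_card:
  assumes "finite J"
  shows "(\<Sum>l\<in>J. indicator A (f l) :: real) = real (card {l\<in>J. f l \<in> A})"
  using assms
proof (induction J rule: finite_induct)
  case (insert x F)
  have "{l \<in> insert x F. f l \<in> A} = (if f x \<in> A then insert x {l \<in> F. f l \<in> A} else {l \<in> F. f l \<in> A})"
    by auto
  then show ?case using insert by (simp add: indicator_def)
qed simp

lemma ex_small:
  fixes P :: "'b measure" and F :: "'b \<Rightarrow> ennreal" and g :: "'b \<Rightarrow> nat"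
  assumes "prob_space P" and "\<And>\<omega>. \<omega> \<in> space P \<Longrightarrow> of_nat (g \<omega>) \<le> F \<omega>"
    and "(\<integral>\<^sup>+\<omega>. F \<omega> \<partial>P) \<le> ennreal B" and "B \<ge> 0"
  shows "\<exists>\<omega>\<in>space P. real (g \<omega>) \<le> B"
proof (rule ccontr)
  interpret prob_space P by fact
  assume "\<not> ?thesis"
  then have h: "\<And>\<omega>. \<omega> \<in> space P \<Longrightarrow> real (g \<omega>) > B" by auto
  define k where "k = nat (floor B) + 1"
  have kB: "real k > B" unfolding k_def using assms(4) by linarith
  have gk: "\<And>\<omega>. \<omega> \<in> space P \<Longrightarrow> k \<le> g \<omega>"
  proof -
    fix \<omega> assume "\<omega> \<in> space P"
    then have "real (g \<omega>) > B" by (rule h)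
    then have "floor B < int (g \<omega>)" by linarith
    moreover have "0 \<le> floor B" using assms(4) by simp
    ultimately have "nat (floor B) < g \<omega>" by (simp add: nat_less_iff)
    then show "k \<le> g \<omega>" unfolding k_def by simp
  qed
  have "(\<integral>\<^sup>+\<omega>. of_nat k \<partial>P) \<le> (\<integral>\<^sup>+\<omega>. F \<omega> \<partial>P)"
    using gk assms(2) by (intro nn_integral_mono) (meson of_nat_le_iff order_trans)
  then have "of_nat k \<le> ennreal B" using assms(3) by (simp add: emeasure_space_1)
  then have "real k \<le> B" using assms(4) by (simp add: ennreal_of_nat_eq_real_of_nat)
  then show False using kB by simp
qed


lemma ennreal_one_le4:
  fixes a b c e :: ennreal
  assumes "1 \<le> a \<or> 1 \<le> b \<or> 1 \<le> c \<or> 1 \<le> e"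
  shows "1 \<le> a + b + c + e"
proof -
  have "a \<le> a + b + c + e" "b \<le> a + b + c + e" "c \<le> a + b + c + e" "e \<le> a + b + c + e"
    by (simp_all add: add_increasing add_increasing2)
  then show ?thesis using assms order_trans by blast
qed

lemma card_ennreal_sum:
  assumes "finite I"
  shows "of_nat (card {i\<in>I. P i}) = (\<Sum>i\<in>I. if P i then 1 else 0 :: ennreal)"
  using assms by (simp add: sum.If_cases Int_def)


theorem lemma2p1:
  fixes \<Omega> :: "(real ^ 'n) set"
  assumes "CARD('n) \<ge> 1000"
    and "bounded \<Omega>" and "\<Omega> \<in> sets lebesgue"
  shows "\<exists>X. finite X \<and> X \<subseteq> \<Omega> \<and>
      real (card X) \<ge> (1 - 1 / real CARD('n)) *
        ((sqrt (real CARD('n)) / (4 * ln (real CARD('n)))) ^ CARD('n) / 2 ^ CARD('n)) * measure lebesgue \<Omega> \<and>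
      real (max_degree X (unit_vol_radius TYPE(real ^ 'n))) \<le>
        (sqrt (real CARD('n)) / (4 * ln (real CARD('n)))) ^ CARD('n) *
        (1 + ((sqrt (real CARD('n)) / (4 * ln (real CARD('n)))) ^ CARD('n)) powr (-1/3)) \<and>
      real (max_codegree X (unit_vol_radius TYPE(real ^ 'n))) \<le>
        (sqrt (real CARD('n)) / (4 * ln (real CARD('n)))) ^ CARD('n) * exp (- ((ln (real CARD('n)))\<^sup>2) / 8)"
proof -
  define n where "n = CARD('n)"
  have n1000: "n \<ge> 1000" using assms(1) unfolding n_def .
  define d where "d = real n"
  define Ld where "Ld = ln d"
  define \<Delta> where "\<Delta> = (sqrt d / (4 * Ld)) ^ n"
  define L where "L = Ld ^ 2"
  define r where "r = unit_vol_radius TYPE(real ^ 'n)"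
  define V where "V = measure lebesgue \<Omega>"
  note nm = numerics[OF n1000, folded d_def, folded Ld_def, folded \<Delta>_def, folded L_def]
  have d1000: "d \<ge> 1000" using n1000 unfolding d_def by simp
  have Ld0: "0 < Ld" and Ld_d: "L < d" and D0: "0 < \<Delta>" and L38: "1 \<le> 3 * L / 8 - 1"
    and nm_close: "1 / 2 ^ n \<le> 1 / (6 * d)"
    and nm_deg: "exp (- (\<Delta> / (16 * d ^ 2))) \<le> 1 / (6 * d)"
    and nm_pair: "\<Delta> * 2 ^ n * exp (- (\<Delta> * exp (- L / 8)) * (3 * L / 8 - 1)) \<le> 1 / (6 * d)"
    using nm by auto
  have goal_eq: "?thesis \<longleftrightarrow> (\<exists>X. finite X \<and> X \<subseteq> \<Omega> \<and> real (card X) \<ge> (1 - 1 / d) * (\<Delta> / 2 ^ n) * V \<and>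
      real (max_degree X r) \<le> \<Delta> * (1 + \<Delta> powr (-1/3)) \<and>
      real (max_codegree X r) \<le> \<Delta> * exp (- L / 8))"
    unfolding n_def d_def Ld_def \<Delta>_def L_def r_def V_def by simp
  have DIMn: "DIM(real ^ 'n) = n" unfolding n_def by simp
  have r0: "r > 0" unfolding r_def by (rule uvr(1))
  have vol_cball: "emeasure lborel (cball c \<rho>) = ennreal ((\<rho> / r) ^ n)" if "\<rho> \<ge> 0" for c :: "real ^ 'n" and \<rho>
    using uvr(2)[OF that, of c] unfolding r_def DIMn .
  have vol_ball: "emeasure lborel (ball c \<rho>) = ennreal ((\<rho> / r) ^ n)" if "\<rho> \<ge> 0" for c :: "real ^ 'n" and \<rho>
    using uvr(3)[OF that, of c] unfolding r_def DIMn .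
  have \<Omega>meas: "\<Omega> \<in> lmeasurable" using assms(2,3) by (rule bounded_set_imp_lmeasurable)
  have V0: "V \<ge> 0" unfolding V_def by simp
  have main: "\<exists>X. finite X \<and> X \<subseteq> \<Omega> \<and> real (card X) \<ge> (1 - 1 / d) * (\<Delta> / 2 ^ n) * V \<and>
      real (max_degree X r) \<le> \<Delta> * (1 + \<Delta> powr (-1/3)) \<and>
      real (max_codegree X r) \<le> \<Delta> * exp (- L / 8)"
  proof (cases "V = 0")
    case True
    have "real (max_degree ({} :: (real ^ 'n) set) r) = 0" by (simp add: max_degree_def)
    moreover have "real (max_codegree ({} :: (real ^ 'n) set) r) = 0" by (simp add: max_codegree_def)
    moreover have "0 \<le> \<Delta> * (1 + \<Delta> powr (-1/3))" using D0 by (intro mult_nonneg_nonneg add_nonneg_nonneg) auto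
    moreover have "0 \<le> \<Delta> * exp (- L / 8)" using D0 by simp
    ultimately show ?thesis using True by (intro exI[of _ "{}"]) auto
  next
    case False
    then have Vpos: "V > 0" using V0 by simp
    have eO: "emeasure lebesgue \<Omega> = ennreal V"
      using \<Omega>meas unfolding V_def by (simp add: emeasure_eq_measure2)
    obtain C T0 where C: "fsigma C" and T0: "T0 \<in> null_sets lebesgue" and CT: "C \<union> T0 = \<Omega>"
      using lebesgue_set_almost_fsigma[OF assms(3)] by metis
    have Cb: "C \<in> sets borel" using C by (rule fsigma_borel)
    have CO: "C \<subseteq> \<Omega>" using CT by auto
    have eC: "emeasure lborel C = ennreal V"
    proof -
      have Cl: "C \<in> sets lebesgue" using Cb by simp
      have "emeasure lebesgue (C \<union> T0) = emeasure lebesgue C" using Cl T0 by (rule emeasure_Un_null_set)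
      then show ?thesis using eO CT emeasure_lebesgue_borel[OF Cb] by simp
    qed
    define M where "M = uniform_measure lborel C"
    have pM: "prob_space M" unfolding M_def using eC Vpos by (intro prob_space_uniform_measure) auto
    have sM: "sets M = sets borel" unfolding M_def by simp
    have M0: "emeasure M (- C) = 0" unfolding M_def using Cb by (subst emeasure_uniform_measure) auto
    have mbound: "measure M A \<le> a / V" if "A \<in> sets borel" "emeasure lborel A = ennreal a" "a \<ge> 0" for A a
      unfolding M_def using Cb eC Vpos that by (intro unif_bound) auto
    interpret Mp: prob_space M by (fact pM)
    define R where "R = 2 * r"
    define t where "t = 4 * r * Ld / sqrt d"
    define \<tau> where "\<tau> = \<Delta> * exp (- L / 8)"
    define lam where "lam = \<Delta> * (1 - 1 / (2 * d)) / 2 ^ n"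
    define N where "N = nat \<lceil>lam * V\<rceil>"
    define I where "I = {..<N}"
    have sqd: "sqrt d > 0" using d1000 by simp
    have t0: "t > 0" unfolding t_def using r0 Ld0 sqd by simp
    have R0: "R > 0" unfolding R_def using r0 by simp
    have d2: "0 < 1 - 1 / (2 * d)" using d1000 by simp
    have lam0: "lam > 0" unfolding lam_def using D0 d2 by simp
    have NlamV: "lam * V \<le> real N" unfolding N_def by (rule real_nat_ceiling_ge)
    have N1: "real N - 1 \<le> lam * V"
    proof -
      have "real N = real_of_int \<lceil>lam * V\<rceil>" unfolding N_def using lam0 Vpos by simp
      then show ?thesis by linarith
    qed
    have finI: "finite I" unfolding I_def by simp
    have cardI: "card I = N" unfolding I_def by simp
    have Rr: "R / r = 2" unfolding R_def using r0 by simp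
    have tr: "(t / r) ^ n = 1 / \<Delta>"
    proof -
      have "t / r = 4 * Ld / sqrt d" unfolding t_def using r0 by simp
      also have "\<dots> = inverse (sqrt d / (4 * Ld))" by (simp add: inverse_divide)
      finally have "t / r = inverse (sqrt d / (4 * Ld))" .
      then have "(t / r) ^ n = inverse ((sqrt d / (4 * Ld)) ^ n)" by (simp only: power_inverse)
      then show ?thesis unfolding \<Delta>_def by (simp only: inverse_eq_divide)
    qed
    have mR: "measure M (cball y R) \<le> 2 ^ n / V" for y
      using mbound[of "cball y R" "2 ^ n"] vol_cball[of R y] R0 Rr by simp
    have m2R: "measure M (cball y (2 * R)) \<le> 4 ^ n / V" for y
    proof -
      have "(2 * R / r) = 4" using Rr r0 by (simp add: field_simps)
      then show ?thesis using mbound[of "cball y (2 * R)" "4 ^ n"] vol_cball[of "2 * R" y] R0 by simp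
    qed
    have mt: "measure M (ball y t) \<le> (1 / \<Delta>) / V" for y
      using mbound[of "ball y t" "1 / \<Delta>"] vol_ball[of t y] t0 tr D0 by simp
    define R' where "R' = sqrt (R^2 - t^2/4)"
    have t2: "t^2 = 16 * r^2 * L / d"
    proof -
      have "t^2 = (4 * r * Ld)^2 / (sqrt d)^2" unfolding t_def by (simp add: power_divide)
      also have "(sqrt d)^2 = d" using d1000 by simp
      finally show ?thesis unfolding L_def by (simp add: power_mult_distrib)
    qed
    have Rt: "R^2 - t^2/4 = (2 * r)^2 * (1 - L / d)"
      unfolding t2 R_def using d1000 by (simp add: power_mult_distrib algebra_simps)
    have R'r: "R' / r = 2 * sqrt (1 - L / d)"
    proof -
      have "R' = sqrt ((2 * r)^2) * sqrt (1 - L / d)" unfolding R'_def Rt by (simp only: real_sqrt_mult)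
      also have "sqrt ((2 * r)^2) = 2 * r" using r0 by (simp only: real_sqrt_abs)
      finally have "R' = 2 * r * sqrt (1 - L / d)" .
      then show ?thesis using r0 by simp
    qed
    have R'0: "R' \<ge> 0"
    proof -
      have "0 \<le> 1 - L / d" using Ld_d d1000 by simp
      then have "0 \<le> R' / r" unfolding R'r by simp
      then show ?thesis using r0 by (simp add: zero_le_divide_iff)
    qed
    have lensR: "(R' / r) ^ n \<le> 2 ^ n * exp (- L / 2)"
    proof -
      have "1 - L / d \<le> exp (- (L / d))" using exp_ge_add_one_self[of "- (L / d)"] by simp
      then have "sqrt (1 - L / d) \<le> sqrt (exp (- (L / d)))" by (rule real_sqrt_le_mono)
      also have "sqrt (exp (- (L / d))) = exp (- (L / d) / 2)" by (rule real_sqrt_unique) (simp_all add: power2_eq_square exp_add[symmetric])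
      finally have "sqrt (1 - L / d) ^ n \<le> exp (- (L / d) / 2) ^ n" by (intro power_mono) (use Ld_d d1000 in auto)
      also have "exp (- (L / d) / 2) ^ n = exp (- L / 2)"
        by (simp add: exp_of_nat_mult[symmetric] d_def) (use n1000 in simp)
      finally show ?thesis unfolding R'r by (simp add: power_mult_distrib)
    qed
    have mlens: "measure M (cball y1 R \<inter> cball y2 R) \<le> 2 ^ n * exp (- L / 2) / V" if "t \<le> dist y1 y2" for y1 y2
    proof -
      have "measure M (cball y1 R \<inter> cball y2 R) \<le> measure M (cball ((1/2) *\<^sub>R (y1 + y2)) R')"
        unfolding R'_def using lens_subset[OF that] t0 sM by (intro Mp.finite_measure_mono) auto
      also have "\<dots> \<le> (R' / r) ^ n / V"
        using mbound[of "cball ((1/2) *\<^sub>R (y1 + y2)) R'" "(R' / r) ^ n"] vol_cball[OF R'0] R'0 r0 by simp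
      also have "\<dots> \<le> 2 ^ n * exp (- L / 2) / V" using lensR Vpos by (simp add: divide_right_mono)
      finally show ?thesis .
    qed
    define s1 where "s1 = 1 / (4 * d)"
    define s2 where "s2 = 3 * L / 8"
    have s1nn: "0 \<le> s1" unfolding s1_def using d1000 by simp
    have s2nn: "0 \<le> s2" unfolding s2_def L_def by simp
    define P where "P = PiM I (\<lambda>_. M)"
    define cB where "cB = (1 / \<Delta>) / V"
    define dB where "dB = exp ((exp s1 - 1) * (2 ^ n / V) * real (N - 1) - s1 * \<Delta>)"
    define pB where "pB = 4 ^ n / V * exp ((exp s2 - 1) * (2 ^ n * exp (- L / 2) / V) * real (N - 2) - s2 * \<tau>)"
    define fo where "fo \<omega> i = (indicator (- C) (\<omega> i) :: ennreal)" for \<omega> :: "nat \<Rightarrow> real ^ 'n" and i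
    define fc where "fc \<omega> i j = (if dist (\<omega> i) (\<omega> j) < t then 1 else 0 :: ennreal)" for \<omega> :: "nat \<Rightarrow> real ^ 'n" and i j
    define cnt where "cnt \<omega> i = (\<Sum>l\<in>I-{i}. indicator (cball (\<omega> i) R) (\<omega> l) :: real)" for \<omega> :: "nat \<Rightarrow> real ^ 'n" and i
    define cc where "cc \<omega> i j = (\<Sum>l\<in>I-{i,j}. indicator (cball (\<omega> i) R \<inter> cball (\<omega> j) R) (\<omega> l) :: real)" for \<omega> :: "nat \<Rightarrow> real ^ 'n" and i j
    define fd where "fd \<omega> i = (if \<Delta> \<le> cnt \<omega> i then 1 else 0 :: ennreal)" for \<omega> i
    define fp where "fp \<omega> i j = (if t \<le> dist (\<omega> i) (\<omega> j) \<and> dist (\<omega> i) (\<omega> j) \<le> 2 * R \<and> \<tau> \<le> cc \<omega> i j then 1 else 0 :: ennreal)" for \<omega> i j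
    define F where "F \<omega> = (\<Sum>i\<in>I. fo \<omega> i + (\<Sum>j\<in>I-{i}. fc \<omega> i j) + fd \<omega> i + (\<Sum>j\<in>I-{i}. fp \<omega> i j))" for \<omega>
    have io: "(\<integral>\<^sup>+\<omega>. fo \<omega> i \<partial>P) = 0" if "i \<in> I" for i
      unfolding fo_def P_def by (rule L_out[OF pM sM finI that Cb M0])
    have ic: "(\<integral>\<^sup>+\<omega>. fc \<omega> i j \<partial>P) \<le> ennreal cB" if "i \<in> I" "j \<in> I" "i \<noteq> j" for i j
      unfolding fc_def P_def cB_def by (rule L_close[OF pM sM finI that mt])
    have id: "(\<integral>\<^sup>+\<omega>. fd \<omega> i \<partial>P) \<le> ennreal dB" if "i \<in> I" for i
      using L_deg[OF pM sM finI that s1nn mR, where T=\<Delta>] cardI unfolding fd_def cnt_def P_def dB_def by simp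
    have ip: "(\<integral>\<^sup>+\<omega>. fp \<omega> i j \<partial>P) \<le> ennreal pB" if "i \<in> I" "j \<in> I" "i \<noteq> j" for i j
      using L_pair[OF pM sM finI that s2nn mlens m2R, where T=\<tau>] cardI unfolding fp_def cc_def P_def pB_def by simp
    have mo: "(\<lambda>\<omega>. fo \<omega> i) \<in> borel_measurable P" if "i \<in> I" for i
      unfolding fo_def P_def by (rule meas_out_f[OF pM sM that Cb])
    have mc: "(\<lambda>\<omega>. fc \<omega> i j) \<in> borel_measurable P" if "i \<in> I" "j \<in> I" for i j
      unfolding fc_def P_def by (rule meas_close_f[OF pM sM that])
    have md: "(\<lambda>\<omega>. fd \<omega> i) \<in> borel_measurable P" if "i \<in> I" for i
      unfolding fd_def cnt_def P_def by (rule meas_deg_f[OF pM sM that])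
    have mp: "(\<lambda>\<omega>. fp \<omega> i j) \<in> borel_measurable P" if "i \<in> I" "j \<in> I" for i j
      unfolding fp_def cc_def P_def by (rule meas_pair_f[OF pM sM that])
    have Npos: "N \<ge> 1" using NlamV lam0 Vpos by (metis (full_types) le_less_trans less_one mult_pos_pos not_less of_nat_0 of_nat_less_0_iff)
    have Nm1: "real (N - 1) \<le> lam * V" using N1 Npos by (simp add: of_nat_diff)
    have Nm2: "real (N - 2) \<le> lam * V"
    proof -
      have "real (N - 2) \<le> real (N - 1)" by simp
      then show ?thesis using Nm1 by linarith
    qed
    have cB0: "0 \<le> cB" unfolding cB_def using D0 Vpos by simp
    have pB0: "0 \<le> pB" unfolding pB_def using Vpos by simp
    have dB0: "0 \<le> dB" unfolding dB_def by simp
    have bc: "real (N - 1) * cB \<le> 1 / (6 * d)"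
    proof -
      have "real (N - 1) * cB \<le> lam * V * cB" using Nm1 cB0 by (intro mult_right_mono)
      also have "lam * V * cB = (1 - 1 / (2 * d)) / 2 ^ n" unfolding cB_def lam_def using Vpos D0 by (simp add: field_simps)
      also have "\<dots> \<le> 1 / 2 ^ n" using d1000 by (intro divide_right_mono) auto
      also have "\<dots> \<le> 1 / (6 * d)" by (rule nm_close)
      finally show ?thesis .
    qed
    have bd: "dB \<le> 1 / (6 * d)"
    proof -
      have s1le: "s1 \<le> 1" unfolding s1_def using d1000 by simp
      have e1: "exp s1 - 1 \<le> s1 + s1^2" using exp_bound[OF s1nn s1le] by simp
      have e0: "0 \<le> exp s1 - 1" using s1nn by simp
      have "(exp s1 - 1) * (2 ^ n / V) * real (N - 1) \<le> (s1 + s1^2) * (2 ^ n / V) * (lam * V)"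
        using e1 e0 Nm1 Vpos by (intro mult_mono) auto
      also have "\<dots> = (s1 + s1^2) * (\<Delta> * (1 - 2 * s1))" using Vpos unfolding lam_def s1_def by (simp add: field_simps)
      finally have a: "(exp s1 - 1) * (2 ^ n / V) * real (N - 1) - s1 * \<Delta> \<le> (s1 + s1^2) * (\<Delta> * (1 - 2 * s1)) - s1 * \<Delta>"
        by linarith
      have b: "(s1 + s1^2) * (\<Delta> * (1 - 2 * s1)) - s1 * \<Delta> = - (\<Delta> * s1^2) - 2 * (\<Delta> * s1^3)"
        by (simp add: algebra_simps power2_eq_square power3_eq_cube)
      have c: "0 \<le> \<Delta> * s1^3" using D0 s1nn by simp
      have dd: "\<Delta> * s1^2 = \<Delta> / (16 * d^2)" unfolding s1_def by (simp add: power2_eq_square field_simps)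
      have "(exp s1 - 1) * (2 ^ n / V) * real (N - 1) - s1 * \<Delta> \<le> - (\<Delta> / (16 * d^2))"
        using a b c dd by linarith
      then have "dB \<le> exp (- (\<Delta> / (16 * d ^ 2)))" unfolding dB_def by simp
      then show ?thesis using nm_deg by linarith
    qed
    have bp: "real (N - 1) * pB \<le> 1 / (6 * d)"
    proof -
      have e0: "0 \<le> exp s2 - 1" using s2nn by simp
      have "(exp s2 - 1) * (2 ^ n * exp (- L / 2) / V) * real (N - 2) \<le> exp s2 * (2 ^ n * exp (- L / 2) / V) * (lam * V)"
        using e0 Nm2 Vpos by (intro mult_mono) auto
      also have "\<dots> = exp s2 * exp (- L / 2) * \<Delta> * (1 - 1 / (2 * d))" using Vpos unfolding lam_def by (simp add: field_simps)
      also have "\<dots> \<le> exp s2 * exp (- L / 2) * \<Delta>" using D0 d1000 by (simp add: mult_le_cancel_left1)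
      also have "exp s2 * exp (- L / 2) = exp (- L / 8)" unfolding s2_def by (simp add: mult_exp_exp)
      finally have "(exp s2 - 1) * (2 ^ n * exp (- L / 2) / V) * real (N - 2) \<le> \<tau>" unfolding \<tau>_def by (simp add: mult.commute)
      then have expo: "(exp s2 - 1) * (2 ^ n * exp (- L / 2) / V) * real (N - 2) - s2 * \<tau> \<le> - \<tau> * (3 * L / 8 - 1)"
        unfolding s2_def by (simp add: algebra_simps)
      have "real (N - 1) * pB \<le> lam * V * pB" using Nm1 pB0 by (intro mult_right_mono)
      also have "lam * V * pB = \<Delta> * (1 - 1 / (2 * d)) * 2 ^ n * exp ((exp s2 - 1) * (2 ^ n * exp (- L / 2) / V) * real (N - 2) - s2 * \<tau>)"
      proof -
        define E where "E = exp ((exp s2 - 1) * (2 ^ n * exp (- L / 2) / V) * real (N - 2) - s2 * \<tau>)"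
        have f4: "(4::real) ^ n = 2 ^ n * 2 ^ n" using power_mult_distrib[of "2::real" 2 n] by simp
        have "lam * V * pB = \<Delta> * (1 - 1 / (2 * d)) / 2 ^ n * V * (2 ^ n * 2 ^ n / V * E)"
          unfolding pB_def lam_def E_def f4 by simp
        also have "\<dots> = \<Delta> * (1 - 1 / (2 * d)) * 2 ^ n * E" using Vpos by simp
        finally show ?thesis unfolding E_def .
      qed
      also have "\<dots> \<le> \<Delta> * 2 ^ n * exp (- \<tau> * (3 * L / 8 - 1))"
        using expo D0 d1000 by (intro mult_mono) (auto simp: mult_le_cancel_left1)
      also have "\<dots> \<le> 1 / (6 * d)" using nm_pair unfolding \<tau>_def by simp
      finally show ?thesis .
    qed
    have mcs: "(\<lambda>\<omega>. \<Sum>j\<in>I-{i}. fc \<omega> i j) \<in> borel_measurable P" if "i \<in> I" for i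
      using that by (intro borel_measurable_sum mc) auto
    have mps: "(\<lambda>\<omega>. \<Sum>j\<in>I-{i}. fp \<omega> i j) \<in> borel_measurable P" if "i \<in> I" for i
      using that by (intro borel_measurable_sum mp) auto
    have mi: "(\<lambda>\<omega>. fo \<omega> i + (\<Sum>j\<in>I-{i}. fc \<omega> i j) + fd \<omega> i + (\<Sum>j\<in>I-{i}. fp \<omega> i j)) \<in> borel_measurable P"
      if "i \<in> I" for i
      using that by (intro borel_measurable_add mo mcs md mps)
    have per_i: "(\<integral>\<^sup>+\<omega>. fo \<omega> i + (\<Sum>j\<in>I-{i}. fc \<omega> i j) + fd \<omega> i + (\<Sum>j\<in>I-{i}. fp \<omega> i j) \<partial>P) \<le> ennreal (1 / (2 * d))"
      if iI: "i \<in> I" for i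
    proof -
      have a1: "(\<lambda>\<omega>. fo \<omega> i + (\<Sum>j\<in>I-{i}. fc \<omega> i j)) \<in> borel_measurable P"
        using iI by (intro borel_measurable_add mo mcs)
      have a2: "(\<lambda>\<omega>. fo \<omega> i + (\<Sum>j\<in>I-{i}. fc \<omega> i j) + fd \<omega> i) \<in> borel_measurable P"
        using iI by (intro borel_measurable_add mo mcs md)
      have "(\<integral>\<^sup>+\<omega>. fo \<omega> i + (\<Sum>j\<in>I-{i}. fc \<omega> i j) + fd \<omega> i + (\<Sum>j\<in>I-{i}. fp \<omega> i j) \<partial>P)
          = (\<integral>\<^sup>+\<omega>. fo \<omega> i \<partial>P) + (\<integral>\<^sup>+\<omega>. (\<Sum>j\<in>I-{i}. fc \<omega> i j) \<partial>P) + (\<integral>\<^sup>+\<omega>. fd \<omega> i \<partial>P) + (\<integral>\<^sup>+\<omega>. (\<Sum>j\<in>I-{i}. fp \<omega> i j) \<partial>P)"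
        by (simp add: nn_integral_add[OF a2 mps[OF iI]] nn_integral_add[OF a1 md[OF iI]] nn_integral_add[OF mo[OF iI] mcs[OF iI]])
      also have "(\<integral>\<^sup>+\<omega>. (\<Sum>j\<in>I-{i}. fc \<omega> i j) \<partial>P) = (\<Sum>j\<in>I-{i}. \<integral>\<^sup>+\<omega>. fc \<omega> i j \<partial>P)"
        using iI by (intro nn_integral_sum mc) auto
      also have "(\<integral>\<^sup>+\<omega>. (\<Sum>j\<in>I-{i}. fp \<omega> i j) \<partial>P) = (\<Sum>j\<in>I-{i}. \<integral>\<^sup>+\<omega>. fp \<omega> i j \<partial>P)"
        using iI by (intro nn_integral_sum mp) auto
      also have "(\<integral>\<^sup>+\<omega>. fo \<omega> i \<partial>P) + (\<Sum>j\<in>I-{i}. \<integral>\<^sup>+\<omega>. fc \<omega> i j \<partial>P) + (\<integral>\<^sup>+\<omega>. fd \<omega> i \<partial>P) + (\<Sum>j\<in>I-{i}. \<integral>\<^sup>+\<omega>. fp \<omega> i j \<partial>P)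
          \<le> 0 + (\<Sum>j\<in>I-{i}. ennreal cB) + ennreal dB + (\<Sum>j\<in>I-{i}. ennreal pB)"
        using io[OF iI] ic id[OF iI] ip iI by (intro add_mono sum_mono) auto
      also have "\<dots> = ennreal (real (N - 1) * cB + dB + real (N - 1) * pB)"
      proof -
        have cI: "card (I - {i}) = N - 1" using iI finI cardI by simp
        have e1: "ennreal (real (N - 1) * cB) = ennreal (real (N - 1)) * ennreal cB" using cB0 by (simp add: ennreal_mult)
        have e2: "ennreal (real (N - 1) * pB) = ennreal (real (N - 1)) * ennreal pB" using pB0 by (simp add: ennreal_mult)
        have e3: "ennreal (real (N - 1) * cB + dB + real (N - 1) * pB) = ennreal (real (N - 1) * cB) + ennreal dB + ennreal (real (N - 1) * pB)"
          using cB0 dB0 pB0 by (simp add: ennreal_plus)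
        have "0 + (\<Sum>j\<in>I-{i}. ennreal cB) + ennreal dB + (\<Sum>j\<in>I-{i}. ennreal pB)
            = ennreal (real (N - 1)) * ennreal cB + ennreal dB + ennreal (real (N - 1)) * ennreal pB"
          using cI by (simp add: ennreal_of_nat_eq_real_of_nat)
        then show ?thesis unfolding e3 e1 e2 .
      qed
      also have "\<dots> \<le> ennreal (1 / (2 * d))" using bc bd bp d1000 by (intro ennreal_leI) simp
      finally show ?thesis .
    qed
    have intF: "(\<integral>\<^sup>+\<omega>. F \<omega> \<partial>P) \<le> ennreal (real N * (1 / (2 * d)))"
    proof -
      have "(\<integral>\<^sup>+\<omega>. F \<omega> \<partial>P) = (\<Sum>i\<in>I. \<integral>\<^sup>+\<omega>. fo \<omega> i + (\<Sum>j\<in>I-{i}. fc \<omega> i j) + fd \<omega> i + (\<Sum>j\<in>I-{i}. fp \<omega> i j) \<partial>P)"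
        unfolding F_def by (intro nn_integral_sum mi)
      also have "\<dots> \<le> (\<Sum>i\<in>I. ennreal (1 / (2 * d)))" by (intro sum_mono per_i)
      also have "\<dots> = ennreal (real N) * ennreal (1 / (2 * d))" using cardI
        by (simp add: ennreal_of_nat_eq_real_of_nat)
      also have "\<dots> = ennreal (real N * (1 / (2 * d)))" using d1000 by (intro ennreal_mult[symmetric]) auto
      finally show ?thesis .
    qed
    define bad where "bad \<omega> i = (\<omega> i \<notin> C \<or> (\<exists>j\<in>I-{i}. dist (\<omega> i) (\<omega> j) < t) \<or> \<Delta> \<le> cnt \<omega> i \<or>
        (\<exists>j\<in>I-{i}. t \<le> dist (\<omega> i) (\<omega> j) \<and> dist (\<omega> i) (\<omega> j) \<le> 2 * R \<and> \<tau> \<le> cc \<omega> i j))" for \<omega> i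
    have pw: "of_nat (card {i\<in>I. bad \<omega> i}) \<le> F \<omega>" for \<omega>
    proof -
      have "of_nat (card {i\<in>I. bad \<omega> i}) = (\<Sum>i\<in>I. if bad \<omega> i then 1 else 0 :: ennreal)"
        using finI by (rule card_ennreal_sum)
      also have "\<dots> \<le> F \<omega>" unfolding F_def
      proof (rule sum_mono)
        fix i assume iI: "i \<in> I"
        show "(if bad \<omega> i then 1 else 0) \<le> fo \<omega> i + (\<Sum>j\<in>I-{i}. fc \<omega> i j) + fd \<omega> i + (\<Sum>j\<in>I-{i}. fp \<omega> i j)"
        proof (cases "bad \<omega> i")
          case False then show ?thesis by simp
        next
          case True
          then have "1 \<le> fo \<omega> i \<or> 1 \<le> (\<Sum>j\<in>I-{i}. fc \<omega> i j) \<or> 1 \<le> fd \<omega> i \<or> 1 \<le> (\<Sum>j\<in>I-{i}. fp \<omega> i j)"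
            unfolding bad_def
          proof (elim disjE)
            assume "\<omega> i \<notin> C" then show ?thesis by (simp add: fo_def)
          next
            assume "\<exists>j\<in>I-{i}. dist (\<omega> i) (\<omega> j) < t"
            then obtain j where j: "j \<in> I-{i}" "dist (\<omega> i) (\<omega> j) < t" by blast
            have "fc \<omega> i j \<le> (\<Sum>j\<in>I-{i}. fc \<omega> i j)" using finI j by (intro member_le_sum) auto
            then show ?thesis using j by (simp add: fc_def)
          next
            assume "\<Delta> \<le> cnt \<omega> i" then show ?thesis by (simp add: fd_def)
          next
            assume "\<exists>j\<in>I-{i}. t \<le> dist (\<omega> i) (\<omega> j) \<and> dist (\<omega> i) (\<omega> j) \<le> 2 * R \<and> \<tau> \<le> cc \<omega> i j"
            then obtain j where j: "j \<in> I-{i}" "t \<le> dist (\<omega> i) (\<omega> j) \<and> dist (\<omega> i) (\<omega> j) \<le> 2 * R \<and> \<tau> \<le> cc \<omega> i j" by blast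
            have "fp \<omega> i j \<le> (\<Sum>j\<in>I-{i}. fp \<omega> i j)" using finI j by (intro member_le_sum) auto
            then show ?thesis using j by (simp add: fp_def)
          qed
          then show ?thesis using True ennreal_one_le4 by simp
        qed
      qed
      finally show ?thesis .
    qed
    have pP: "prob_space P" unfolding P_def by (intro prob_space_PiM) (simp add: pM)
    obtain \<omega> where \<omega>sp: "\<omega> \<in> space P" and few: "real (card {i\<in>I. bad \<omega> i}) \<le> real N * (1 / (2 * d))"
      using ex_small[OF pP pw intF] d1000 by auto
    define G where "G = {i\<in>I. \<not> bad \<omega> i}"
    define X where "X = \<omega> ` G"
    have GI: "G \<subseteq> I" unfolding G_def by auto
    have finG: "finite G" using GI finI by (rule finite_subset)
    have cardG: "real (card G) \<ge> real N - real N * (1 / (2 * d))"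
    proof -
      have "G = I - {i\<in>I. bad \<omega> i}" unfolding G_def by auto
      then have "card G = card I - card {i\<in>I. bad \<omega> i}" using finI by (simp add: card_Diff_subset)
      moreover have "card {i\<in>I. bad \<omega> i} \<le> card I" using finI by (intro card_mono) auto
      ultimately have "real (card G) = real N - real (card {i\<in>I. bad \<omega> i})" using cardI by (simp add: of_nat_diff)
      then show ?thesis using few by linarith
    qed
    have goodC: "\<omega> i \<in> C" if "i \<in> G" for i using that unfolding G_def bad_def by auto
    have goodt: "t \<le> dist (\<omega> i) (\<omega> j)" if "i \<in> G" "j \<in> I" "j \<noteq> i" for i j
      using that unfolding G_def bad_def by force
    have goodd: "cnt \<omega> i < \<Delta>" if "i \<in> G" for i using that unfolding G_def bad_def by force
    have goodp: "cc \<omega> i j < \<tau>" if "i \<in> G" "j \<in> I" "j \<noteq> i" "t \<le> dist (\<omega> i) (\<omega> j)" "dist (\<omega> i) (\<omega> j) \<le> 2 * R" for i j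
      using that unfolding G_def bad_def by force
    have inj: "inj_on \<omega> G"
    proof (rule inj_onI)
      fix i j assume ij: "i \<in> G" "j \<in> G" "\<omega> i = \<omega> j"
      show "i = j"
      proof (rule ccontr)
        assume "i \<noteq> j"
        then have "t \<le> dist (\<omega> i) (\<omega> j)" using ij GI by (intro goodt) auto
        then show False using ij t0 by simp
      qed
    qed
    have cardX: "card X = card G" unfolding X_def using inj by (rule card_image)
    have cnt_card: "cnt \<omega> i = real (card {l\<in>I-{i}. \<omega> l \<in> cball (\<omega> i) R})" for i
      unfolding cnt_def using finI by (intro sum_ind_card) auto
    have cc_card: "cc \<omega> i j = real (card {l\<in>I-{i,j}. \<omega> l \<in> cball (\<omega> i) R \<inter> cball (\<omega> j) R})" for i j
      unfolding cc_def using finI by (intro sum_ind_card) auto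
    have degx: "real (card (ball_graph_nbrs X r x)) < \<Delta>" if xX: "x \<in> X" for x
    proof -
      obtain i where iG: "i \<in> G" and xi: "x = \<omega> i" using xX unfolding X_def by auto
      define S where "S = {l\<in>I-{i}. \<omega> l \<in> cball (\<omega> i) R}"
      have "ball_graph_nbrs X r x \<subseteq> \<omega> ` S"
      proof
        fix y assume "y \<in> ball_graph_nbrs X r x"
        then have y: "y \<in> X" "y \<noteq> x" "norm (x - y) \<le> 2 * r" unfolding ball_graph_nbrs_def by auto
        then obtain l where lG: "l \<in> G" and yl: "y = \<omega> l" unfolding X_def by auto
        have "l \<noteq> i" using y(2) xi yl by auto
        moreover have "l \<in> I" using lG GI by auto
        moreover have "\<omega> l \<in> cball (\<omega> i) R" using y(3) xi yl unfolding R_def by (simp add: dist_norm)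
        ultimately show "y \<in> \<omega> ` S" unfolding S_def using yl by auto
      qed
      then have "card (ball_graph_nbrs X r x) \<le> card (\<omega> ` S)"
        using finI unfolding S_def by (intro card_mono) auto
      also have "\<dots> \<le> card S" using finI unfolding S_def by (intro card_image_le) auto
      finally have "real (card (ball_graph_nbrs X r x)) \<le> cnt \<omega> i" unfolding cnt_card S_def by simp
      then show ?thesis using goodd[OF iG] by linarith
    qed
    have codx: "real (card (ball_graph_nbrs X r x \<inter> ball_graph_nbrs X r y)) < \<tau>"
      if xX: "x \<in> X" and yX: "y \<in> X" and xy: "x \<noteq> y" for x y
    proof -
      obtain i where iG: "i \<in> G" and xi: "x = \<omega> i" using xX unfolding X_def by auto
      obtain j where jG: "j \<in> G" and yj: "y = \<omega> j" using yX unfolding X_def by auto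
      have ij: "i \<noteq> j" using xy xi yj by auto
      have jI: "j \<in> I" using jG GI by auto
      have tau0: "0 < \<tau>" unfolding \<tau>_def using D0 by simp
      show ?thesis
      proof (cases "dist x y \<le> 2 * R")
        case False
        have "ball_graph_nbrs X r x \<inter> ball_graph_nbrs X r y = {}"
        proof (rule ccontr)
          assume "ball_graph_nbrs X r x \<inter> ball_graph_nbrs X r y \<noteq> {}"
          then obtain z where z1: "norm (x - z) \<le> 2 * r" and z2: "norm (y - z) \<le> 2 * r" unfolding ball_graph_nbrs_def by auto
          have "dist x y \<le> dist x z + dist y z" by (rule dist_triangle2)
          also have "\<dots> \<le> 2 * r + 2 * r" using z1 z2 by (simp add: dist_norm)
          finally have "dist x y \<le> 2 * R" unfolding R_def by simp
          then show False using False by simp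
        qed
        then show ?thesis using tau0 by simp
      next
        case True
        have td: "t \<le> dist (\<omega> i) (\<omega> j)" using goodt[OF iG jI] ij by auto
        define S where "S = {l\<in>I-{i,j}. \<omega> l \<in> cball (\<omega> i) R \<inter> cball (\<omega> j) R}"
        have "ball_graph_nbrs X r x \<inter> ball_graph_nbrs X r y \<subseteq> \<omega> ` S"
        proof
          fix z assume "z \<in> ball_graph_nbrs X r x \<inter> ball_graph_nbrs X r y"
          then have z: "z \<in> X" "z \<noteq> x" "z \<noteq> y" "norm (x - z) \<le> 2 * r" "norm (y - z) \<le> 2 * r"
            unfolding ball_graph_nbrs_def by auto
          then obtain l where lG: "l \<in> G" and zl: "z = \<omega> l" unfolding X_def by auto
          have "l \<noteq> i" "l \<noteq> j" using z(2,3) xi yj zl by auto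
          moreover have "l \<in> I" using lG GI by auto
          moreover have "\<omega> l \<in> cball (\<omega> i) R \<inter> cball (\<omega> j) R" using z(4,5) xi yj zl unfolding R_def by (simp add: dist_norm)
          ultimately show "z \<in> \<omega> ` S" unfolding S_def using zl by auto
        qed
        then have "card (ball_graph_nbrs X r x \<inter> ball_graph_nbrs X r y) \<le> card (\<omega> ` S)"
          using finI unfolding S_def by (intro card_mono) auto
        also have "\<dots> \<le> card S" using finI unfolding S_def by (intro card_image_le) auto
        finally have "real (card (ball_graph_nbrs X r x \<inter> ball_graph_nbrs X r y)) \<le> cc \<omega> i j"
          unfolding cc_card S_def by simp
        moreover have "cc \<omega> i j < \<tau>" using goodp[OF iG jI] ij td True xi yj by auto
        ultimately show ?thesis by linarith
      qed
    qed
    have finX: "finite X" unfolding X_def using finG by simp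
    show ?thesis
    proof (intro exI[of _ X] conjI)
      show "finite X" by (fact finX)
      show "X \<subseteq> \<Omega>" unfolding X_def using goodC CO by auto
      show "(1 - 1 / d) * (\<Delta> / 2 ^ n) * V \<le> real (card X)"
      proof -
        have "(1 - 1 / d) * (\<Delta> / 2 ^ n) * V \<le> (1 - 1 / (2 * d)) * (lam * V)"
        proof -
          define u where "u = 1 / (2 * d)"
          have u2: "2 * u = 1 / d" unfolding u_def by simp
          have sq: "(1 - u)^2 = 1 + u^2 - 2 * u" by (simp add: power2_diff)
          have "0 \<le> u^2" by simp
          then have le: "1 - 1 / d \<le> (1 - u)^2" using sq u2 by linarith
          have eq: "(1 - 1 / (2 * d)) * (lam * V) = (1 - u)^2 * ((\<Delta> / 2 ^ n) * V)"
            unfolding lam_def u_def by (simp add: power2_eq_square)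
          have "0 \<le> (\<Delta> / 2 ^ n) * V" using D0 Vpos by simp
          then have "(1 - 1 / d) * ((\<Delta> / 2 ^ n) * V) \<le> (1 - u)^2 * ((\<Delta> / 2 ^ n) * V)"
            by (rule mult_right_mono[OF le])
          then show ?thesis unfolding eq by (simp add: mult.assoc)
        qed
        also have "\<dots> \<le> (1 - 1 / (2 * d)) * real N" using NlamV d2 by (intro mult_left_mono) auto
        also have "\<dots> \<le> real (card X)" using cardG cardX by (simp add: algebra_simps)
        finally show ?thesis .
      qed
      show "real (max_degree X r) \<le> \<Delta> * (1 + \<Delta> powr (-1/3))"
      proof -
        define K where "K = insert 0 ((\<lambda>x. card (ball_graph_nbrs X r x)) ` X)"
        have "finite K" "K \<noteq> {}" unfolding K_def using finX by auto
        then have "Max K \<in> K" by (rule Max_in)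
        then have "real (Max K) \<le> \<Delta>" unfolding K_def using degx D0 by (auto simp: less_imp_le)
        moreover have "\<Delta> \<le> \<Delta> * (1 + \<Delta> powr (-1/3))" using D0 by simp
        ultimately show ?thesis unfolding max_degree_def K_def by linarith
      qed
      show "real (max_codegree X r) \<le> \<Delta> * exp (- L / 8)"
      proof -
        define K where "K = insert 0 ((\<lambda>(x, y). card (ball_graph_nbrs X r x \<inter> ball_graph_nbrs X r y)) ` {(x, y). x \<in> X \<and> y \<in> X \<and> x \<noteq> y})"
        have "finite {(x, y). x \<in> X \<and> y \<in> X \<and> x \<noteq> y}"
          by (rule finite_subset[of _ "X \<times> X"]) (use finX in auto)
        then have "finite K" "K \<noteq> {}" unfolding K_def by auto
        then have "Max K \<in> K" by (rule Max_in)
        moreover have "0 < \<tau>" unfolding \<tau>_def using D0 by simp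
        ultimately have "real (Max K) \<le> \<tau>" unfolding K_def using codx by (auto simp: less_imp_le)
        then show ?thesis unfolding max_codegree_def K_def \<tau>_def .
      qed
    qed
  qed
  show ?thesis using goal_eq main by blast
qed

end
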